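(* Let $U$ and $V$ be unitary matrices of sizes $N\times N$ and $M\times M$ with no zero entries. Then (a) $\mathbb V_U(1)\otimes\mathbb V_V(1)\subset\mathbb V_{U\otimes V}(1)$, where the left side is the complex span of all $F\otimes G$ with $F\in\mathbb V_U(1)$, $G\in\mathbb V_V(1)$; (b) $i\cdot(\mathrm{Im}\,\mathbb V_U(1)\otimes\mathrm{Im}\,\mathbb V_V(1))\subset\mathrm{Im}\,\mathbb V_{U\otimes V}(1)$, where $\mathrm{Im}\,\mathbb V_U(1)\otimes\mathrm{Im}\,\mathbb V_V(1)$ is the real span of all $F\otimes G$ with $F\in\mathrm{Im}\,\mathbb V_U(1)$, $G\in\mathrm{Im}\,\mathbb V_V(1)$; (c) $\mathbf D(U)\cdot\mathbf D(V)\le\mathbf D(U\otimes V)$. The same holds for more than two factors, where in (b) the multiplier $i$ is replaced by $1$ when the number of factors is odd.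
   Context: $\circ$ is the entrywise product, $\otimes$ the Kronecker product. For unitary $W$ with no zero entries: $\mathcal C_W(F)=(F\circ W)W^*$, $\mathcal D_W(F)=W(\overline F\circ W)^*$, $\mathcal I_W=\mathcal C_W^{-1}\mathcal D_W$; $\mathbb V_W(1)$ is the complex eigenspace of $\mathcal I_W$ for eigenvalue $1$, and $\mathrm{Im}\,\mathbb V_W(1)$ is the real space of its purely imaginary elements. The undephased defect $\mathbf D(W)$ is $\dim_{\mathbb R}\{iR\circ W:\ R\text{ real},\ (iR\circ W)W^*\text{ antihermitian}\}$, which equals $\dim_{\mathbb C}\mathbb V_W(1)=\dim_{\mathbb R}\mathrm{Im}\,\mathbb V_W(1)$. *)

theory Defs
  imports Complex_Main "HOL-Library.Function_Algebras"
begin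

text \<open>Square complex matrices of size n are modelled as functions nat => nat => complex
  that vanish outside the index range {0..<n} x {0..<n}.\<close>

type_synonym cmat = "nat \<Rightarrow> nat \<Rightarrow> complex"

definition sqmats :: "nat \<Rightarrow> cmat set" where
  "sqmats n = {A. \<forall>i j. (n \<le> i \<or> n \<le> j) \<longrightarrow> A i j = 0}"

definition idm :: "nat \<Rightarrow> cmat" where
  "idm n = (\<lambda>i j. if i = j \<and> i < n then 1 else 0)"

definition mmult :: "nat \<Rightarrow> cmat \<Rightarrow> cmat \<Rightarrow> cmat" where
  "mmult n A B = (\<lambda>i j. if i < n \<and> j < n then (\<Sum>k<n. A i k * B k j) else 0)"

definition adj :: "cmat \<Rightarrow> cmat" where
  "adj A = (\<lambda>i j. cnj (A j i))"

definition cconj :: "cmat \<Rightarrow> cmat" where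
  "cconj A = (\<lambda>i j. cnj (A i j))"

definition had :: "cmat \<Rightarrow> cmat \<Rightarrow> cmat" where
  "had A B = (\<lambda>i j. A i j * B i j)"

text \<open>Kronecker product; m is the size of the second factor\<close>
definition kron :: "nat \<Rightarrow> cmat \<Rightarrow> cmat \<Rightarrow> cmat" where
  "kron m A B = (\<lambda>i j. A (i div m) (j div m) * B (i mod m) (j mod m))"

definition unitary :: "nat \<Rightarrow> cmat \<Rightarrow> bool" where
  "unitary n W \<longleftrightarrow> W \<in> sqmats n \<and> mmult n W (adj W) = idm n \<and> mmult n (adj W) W = idm n"

definition no_zero_entries :: "nat \<Rightarrow> cmat \<Rightarrow> bool" where
  "no_zero_entries n W \<longleftrightarrow> (\<forall>i<n. \<forall>j<n. W i j \<noteq> 0)"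

definition antihermitian :: "cmat \<Rightarrow> bool" where
  "antihermitian A \<longleftrightarrow> adj A = - A"

definition rscale :: "real \<Rightarrow> cmat \<Rightarrow> cmat" where
  "rscale r A = (\<lambda>i j. complex_of_real r * A i j)"

definition cscale :: "complex \<Rightarrow> cmat \<Rightarrow> cmat" where
  "cscale c A = (\<lambda>i j. c * A i j)"

definition CW :: "nat \<Rightarrow> cmat \<Rightarrow> cmat \<Rightarrow> cmat" where
  "CW n W F = mmult n (had F W) (adj W)"

definition DW :: "nat \<Rightarrow> cmat \<Rightarrow> cmat \<Rightarrow> cmat" where
  "DW n W F = mmult n W (adj (had (cconj F) W))"

definition IW :: "nat \<Rightarrow> cmat \<Rightarrow> cmat \<Rightarrow> cmat" where
  "IW n W F = inv_into (sqmats n) (CW n W) (DW n W F)"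

definition V1 :: "nat \<Rightarrow> cmat \<Rightarrow> cmat set" where
  "V1 n W = {F \<in> sqmats n. IW n W F = F}"

definition ImV1 :: "nat \<Rightarrow> cmat \<Rightarrow> cmat set" where
  "ImV1 n W = {F \<in> V1 n W. \<forall>i j. Re (F i j) = 0}"

text \<open>undephased defect: real dimension of {iR o W : R real, (iR o W) W^* antihermitian}\<close>
definition defect :: "nat \<Rightarrow> cmat \<Rightarrow> nat" where
  "defect n W = vector_space.dim rscale
     {had (\<lambda>i j. \<i> * complex_of_real (R i j)) W | R :: nat \<Rightarrow> nat \<Rightarrow> real.
        antihermitian (mmult n (had (\<lambda>i j. \<i> * complex_of_real (R i j)) W) (adj W))}"

fun ksize :: "(nat \<times> cmat) list \<Rightarrow> nat" where
  "ksize [] = 1"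
| "ksize (p # ps) = fst p * ksize ps"

fun kmat :: "(nat \<times> cmat) list \<Rightarrow> cmat" where
  "kmat [] = idm 1"
| "kmat (p # ps) = kron (ksize ps) (snd p) (kmat ps)"

end

theory Submission
  imports Defs
begin

lemma fun_app_sum: "(sum f A) i j = (\<Sum>x\<in>A. f x i j)" for f :: "'a \<Rightarrow> cmat"
  by (induct A rule: infinite_finite_induct) auto

interpretation cm: module cscale
  by unfold_locales (auto simp: cscale_def fun_eq_iff algebra_simps)
interpretation rv: vector_space rscale
  by unfold_locales (auto simp: rscale_def fun_eq_iff algebra_simps)

lemma sqmatsD: "A \<in> sqmats n \<Longrightarrow> n \<le> i \<or> n \<le> j \<Longrightarrow> A i j = 0"
  by (auto simp add: sqmats_def)
lemma sqmatsI: "(\<And>i j. n \<le> i \<or> n \<le> j \<Longrightarrow> A i j = 0) \<Longrightarrow> A \<in> sqmats n"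
  by (simp add: sqmats_def)

lemma mmult_sq[simp]: "mmult n A B \<in> sqmats n"
  by (auto simp: sqmats_def mmult_def)
lemma had_sq: "W \<in> sqmats n \<Longrightarrow> had F W \<in> sqmats n"
  by (auto simp: sqmats_def had_def)
lemma adj_sq: "A \<in> sqmats n \<Longrightarrow> adj A \<in> sqmats n"
  by (auto simp: sqmats_def adj_def)
lemma cscale_sq: "A \<in> sqmats n \<Longrightarrow> cscale c A \<in> sqmats n"
  by (auto simp: sqmats_def cscale_def)

lemma mmult_assoc: "mmult n (mmult n A B) C = mmult n A (mmult n B C)"
  unfolding mmult_def fun_eq_iff
  by (auto simp: sum_distrib_left sum_distrib_right mult.assoc intro: sum.swap)

lemma mmult_idm_right: "A \<in> sqmats n \<Longrightarrow> mmult n A (idm n) = A"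
  unfolding mmult_def idm_def fun_eq_iff
  by (auto simp: sqmats_def if_distrib cong: if_cong)

lemma mmult_idm_left: "A \<in> sqmats n \<Longrightarrow> mmult n (idm n) A = A"
proof -
  assume A: "A \<in> sqmats n"
  have *: "(\<Sum>k<n. (if i = k \<and> i < n then 1 else 0) * A k j) = A i j" if "i < n" for i j
  proof -
    have "(\<Sum>k<n. (if i = k \<and> i < n then 1 else 0) * A k j) = (\<Sum>k<n. if i = k then A k j else 0)"
      using that by (intro sum.cong) auto
    also have "\<dots> = A i j" using that by (simp add: sum.delta)
    finally show ?thesis .
  qed
  show ?thesis unfolding mmult_def idm_def fun_eq_iff
    using A * by (auto simp: sqmats_def)
qed

lemma mmult_cscale_left: "mmult n (cscale c A) B = cscale c (mmult n A B)"
  by (auto simp: mmult_def cscale_def fun_eq_iff sum_distrib_left mult.assoc)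
lemma mmult_cscale_right: "mmult n A (cscale c B) = cscale c (mmult n A B)"
  by (auto simp: mmult_def cscale_def fun_eq_iff sum_distrib_left mult.left_commute)
lemma mmult_add_left: "mmult n (A + A') B = mmult n A B + mmult n A' B"
  by (auto simp: mmult_def fun_eq_iff sum.distrib algebra_simps)
lemma mmult_add_right: "mmult n A (B + B') = mmult n A B + mmult n A B'"
  by (auto simp: mmult_def fun_eq_iff sum.distrib algebra_simps)
lemma mmult_zero_left[simp]: "mmult n 0 B = 0"
  by (auto simp: mmult_def fun_eq_iff)
lemma mmult_zero_right[simp]: "mmult n A 0 = 0"
  by (auto simp: mmult_def fun_eq_iff)

lemma had_add: "had (F + G) W = had F W + had G W"
  by (auto simp: had_def fun_eq_iff algebra_simps)
lemma had_cscale: "had (cscale c F) W = cscale c (had F W)"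
  by (auto simp: had_def cscale_def fun_eq_iff)
lemma had_zero[simp]: "had 0 W = 0"
  by (auto simp: had_def fun_eq_iff)
lemma adj_add: "adj (A + B) = adj A + adj B"
  by (auto simp: adj_def fun_eq_iff)
lemma adj_cscale: "adj (cscale c A) = cscale (cnj c) (adj A)"
  by (auto simp: adj_def cscale_def fun_eq_iff)
lemma adj_zero[simp]: "adj 0 = 0"
  by (auto simp: adj_def fun_eq_iff)
lemma cconj_add: "cconj (A + B) = cconj A + cconj B"
  by (auto simp: cconj_def fun_eq_iff)
lemma cconj_cscale: "cconj (cscale c A) = cscale (cnj c) (cconj A)"
  by (auto simp: cconj_def cscale_def fun_eq_iff)
lemma cconj_zero[simp]: "cconj 0 = 0"
  by (auto simp: cconj_def fun_eq_iff)


lemma sum_divmod: "0 < (M::nat) \<Longrightarrow> (\<Sum>k<N*M. f k) = (\<Sum>a<N. \<Sum>b<M. f (a*M+b))"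
proof -
  assume M: "0 < M"
  have "(\<Sum>k<N*M. f k) = (\<Sum>(a,b)\<in>{..<N}\<times>{..<M}. f (a*M+b))"
  proof (rule sum.reindex_bij_witness[where i="\<lambda>(a,b). a*M+b" and j="\<lambda>k. (k div M, k mod M)"], goal_cases)
    case (1 k) then show ?case by simp
  next
    case (2 k) then show ?case using M by (auto simp: less_mult_imp_div_less)
  next
    case (3 p) then show ?case using M by auto
  next
    case (4 p)
    obtain a b where ab: "p = (a,b)" by force
    have "a < N" "b < M" using 4 ab by auto
    then have "a*M+b < (a+1)*M" by simp
    also have "\<dots> \<le> N*M" using \<open>a<N\<close> by (intro mult_le_mono1) simp
    finally have "a*M+b < N*M" .
    then show ?case using ab by simp
  next
    case (5 k) then show ?case by simp
  qed
  also have "\<dots> = (\<Sum>a<N. \<Sum>b<M. f (a*M+b))" by (simp add: sum.cartesian_product)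
  finally show ?thesis .
qed


lemma sq0: "A \<in> sqmats 0 \<Longrightarrow> A = 0"
  by (auto simp: sqmats_def fun_eq_iff)

lemma kron_zero_right[simp]: "kron M A 0 = 0"
  by (auto simp: kron_def fun_eq_iff)
lemma kron_zero_left[simp]: "kron M 0 B = 0"
  by (auto simp: kron_def fun_eq_iff)

lemma div_ge: "0 < (M::nat) \<Longrightarrow> N*M \<le> i \<Longrightarrow> N \<le> i div M"
  by (simp add: less_eq_div_iff_mult_less_eq)

lemma div_lt: "0 < (M::nat) \<Longrightarrow> i < N*M \<Longrightarrow> i div M < N"
  by (simp add: less_mult_imp_div_less)

lemma kron_sq: "A \<in> sqmats N \<Longrightarrow> B \<in> sqmats M \<Longrightarrow> kron M A B \<in> sqmats (N*M)"
proof (cases "M = 0")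
  case True
  assume "B \<in> sqmats M" then have "B = 0" using True sq0 by simp
  then show ?thesis by (simp add: sqmats_def)
next
  case False
  assume A: "A \<in> sqmats N"
  show ?thesis
  proof (rule sqmatsI)
    fix i j assume "N*M \<le> i \<or> N*M \<le> j"
    then have "N \<le> i div M \<or> N \<le> j div M" using False div_ge by auto
    then show "kron M A B i j = 0" using A by (auto simp: kron_def sqmatsD)
  qed
qed

lemma kron_adj: "adj (kron M A B) = kron M (adj A) (adj B)"
  by (auto simp: kron_def adj_def fun_eq_iff)
lemma kron_cconj: "cconj (kron M A B) = kron M (cconj A) (cconj B)"
  by (auto simp: kron_def cconj_def fun_eq_iff)
lemma kron_had: "had (kron M A B) (kron M C D) = kron M (had A C) (had B D)"
  by (auto simp: kron_def had_def fun_eq_iff)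
lemma kron_cscale_left: "kron M (cscale c A) B = cscale c (kron M A B)"
  by (auto simp: kron_def cscale_def fun_eq_iff mult.assoc)
lemma kron_cscale_right: "kron M A (cscale c B) = cscale c (kron M A B)"
  by (auto simp: kron_def cscale_def fun_eq_iff mult.left_commute)

lemma kron_mmult:
  assumes "A \<in> sqmats N" "B \<in> sqmats M" "C \<in> sqmats N" "D \<in> sqmats M"
  shows "mmult (N*M) (kron M A B) (kron M C D) = kron M (mmult N A C) (mmult M B D)"
proof (cases "M = 0")
  case True
  then have "B = 0" "D = 0" using assms sq0 by auto
  then show ?thesis using True by (auto simp: mmult_def kron_def fun_eq_iff)
next
  case False
  then have M: "0 < M" by simp
  show ?thesis unfolding fun_eq_iff
  proof (intro allI)
    fix i j
    show "mmult (N*M) (kron M A B) (kron M C D) i j = kron M (mmult N A C) (mmult M B D) i j"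
    proof (cases "i < N*M \<and> j < N*M")
      case True
      then have d: "i div M < N" "j div M < N" using div_lt M by auto
      have "mmult (N*M) (kron M A B) (kron M C D) i j
          = (\<Sum>k<N*M. kron M A B i k * kron M C D k j)" using True by (simp add: mmult_def)
      also have "\<dots> = (\<Sum>a<N. \<Sum>b<M. kron M A B i (a*M+b) * kron M C D (a*M+b) j)"
        by (rule sum_divmod[OF M])
      also have "\<dots> = (\<Sum>a<N. \<Sum>b<M. (A (i div M) a * C a (j div M)) * (B (i mod M) b * D b (j mod M)))"
        using M by (intro sum.cong refl) (simp add: kron_def algebra_simps)
      also have "\<dots> = (\<Sum>a<N. A (i div M) a * C a (j div M)) * (\<Sum>b<M. B (i mod M) b * D b (j mod M))"
        by (simp add: sum_product)
      also have "\<dots> = kron M (mmult N A C) (mmult M B D) i j"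
        using d M by (simp add: kron_def mmult_def)
      finally show ?thesis .
    next
      case False
      then have "N \<le> i div M \<or> N \<le> j div M" using div_ge M by auto
      then show ?thesis using False by (auto simp: kron_def mmult_def)
    qed
  qed
qed

lemma kron_idm: "0 < M \<Longrightarrow> kron M (idm N) (idm M) = idm (N*M)"
  unfolding kron_def idm_def fun_eq_iff
  by (auto simp: div_less_iff_less_mult) (metis div_mult_mod_eq)


lemma unitary_kron:
  assumes U: "unitary N U" and V: "unitary M V"
  shows "unitary (N*M) (kron M U V)"
proof (cases "M = 0")
  case True
  then have "V = 0" using V sq0 by (simp add: unitary_def)
  then show ?thesis using True by (simp add: unitary_def sqmats_def mmult_def idm_def fun_eq_iff kron_def)
next
  case False
  have s: "U \<in> sqmats N" "V \<in> sqmats M" "adj U \<in> sqmats N" "adj V \<in> sqmats M"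
    using U V adj_sq by (auto simp: unitary_def)
  show ?thesis using U V False
    unfolding unitary_def
    by (simp add: kron_sq s kron_adj kron_mmult kron_idm)
qed

lemma nz_kron:
  assumes "no_zero_entries N U" "no_zero_entries M V"
  shows "no_zero_entries (N*M) (kron M U V)"
proof (cases "M = 0")
  case True then show ?thesis by (simp add: no_zero_entries_def)
next
  case False
  then show ?thesis using assms
    by (auto simp: no_zero_entries_def kron_def div_lt)
qed

lemma CW_inj:
  assumes U: "unitary n W" and nz: "no_zero_entries n W"
  shows "inj_on (CW n W) (sqmats n)"
proof
  fix F G assume F: "F \<in> sqmats n" and G: "G \<in> sqmats n" and e: "CW n W F = CW n W G"
  have W: "W \<in> sqmats n" and aw: "mmult n (adj W) W = idm n" using U by (auto simp: unitary_def)
  have "mmult n (CW n W F) W = had F W" for F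
    unfolding CW_def mmult_assoc aw using had_sq[OF W] mmult_idm_right by simp
  then have h: "had F W = had G W" using e by metis
  show "F = G"
  proof (rule ext, rule ext)
    fix i j
    show "F i j = G i j"
    proof (cases "i < n \<and> j < n")
      case True
      then have "W i j \<noteq> 0" using nz by (simp add: no_zero_entries_def)
      moreover have "F i j * W i j = G i j * W i j" using h by (metis had_def)
      ultimately show ?thesis by simp
    next
      case False
      then show ?thesis using F G by (auto simp: sqmatsD)
    qed
  qed
qed

lemma CW_surj:
  assumes U: "unitary n W" and nz: "no_zero_entries n W" and Y: "Y \<in> sqmats n"
  shows "Y \<in> CW n W ` sqmats n"
proof -
  have W: "W \<in> sqmats n" and wa: "mmult n W (adj W) = idm n" using U by (auto simp: unitary_def)
  define F where "F = (\<lambda>i j. if i < n \<and> j < n then mmult n Y W i j / W i j else 0)"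
  have Fs: "F \<in> sqmats n" by (auto simp: F_def sqmats_def)
  have "had F W = mmult n Y W"
    using nz by (auto simp: fun_eq_iff had_def F_def no_zero_entries_def mmult_def)
  then have "CW n W F = Y"
    unfolding CW_def by (simp add: mmult_assoc wa mmult_idm_right Y)
  then show ?thesis using Fs by blast
qed

lemma V1_iff:
  assumes U: "unitary n W" and nz: "no_zero_entries n W"
  shows "F \<in> V1 n W \<longleftrightarrow> F \<in> sqmats n \<and> DW n W F = CW n W F"
proof -
  have D: "DW n W F \<in> sqmats n" by (simp add: DW_def)
  show ?thesis
  proof
    assume "F \<in> V1 n W"
    then have F: "F \<in> sqmats n" and e: "inv_into (sqmats n) (CW n W) (DW n W F) = F"
      by (auto simp: V1_def IW_def)
    have "CW n W (inv_into (sqmats n) (CW n W) (DW n W F)) = DW n W F"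
      by (rule f_inv_into_f[OF CW_surj[OF U nz D]])
    then show "F \<in> sqmats n \<and> DW n W F = CW n W F" using e F by simp
  next
    assume "F \<in> sqmats n \<and> DW n W F = CW n W F"
    then show "F \<in> V1 n W"
      using inv_into_f_f[OF CW_inj[OF U nz]] by (simp add: V1_def IW_def)
  qed
qed

lemma V1_subspace:
  assumes U: "unitary n W" and nz: "no_zero_entries n W"
  shows "cm.subspace (V1 n W)"
proof (rule cm.subspaceI)
  show "0 \<in> V1 n W" unfolding V1_iff[OF U nz]
    by (simp add: sqmats_def CW_def DW_def)
next
  fix F G assume "F \<in> V1 n W" "G \<in> V1 n W"
  then show "F + G \<in> V1 n W" unfolding V1_iff[OF U nz]
    by (auto simp: sqmats_def CW_def DW_def had_add cconj_add adj_add mmult_add_left mmult_add_right)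
next
  fix c F assume "F \<in> V1 n W"
  then show "cscale c F \<in> V1 n W" unfolding V1_iff[OF U nz]
    by (auto simp: cscale_sq CW_def DW_def had_cscale cconj_cscale adj_cscale
        mmult_cscale_left mmult_cscale_right)
qed

lemma V1_kron:
  assumes U: "unitary N U" "no_zero_entries N U" and V: "unitary M V" "no_zero_entries M V"
    and F: "F \<in> V1 N U" and G: "G \<in> V1 M V"
  shows "kron M F G \<in> V1 (N*M) (kron M U V)"
proof -
  have UV: "unitary (N*M) (kron M U V)" "no_zero_entries (N*M) (kron M U V)"
    using unitary_kron nz_kron U V by auto
  have Fs: "F \<in> sqmats N" "DW N U F = CW N U F" using F V1_iff[OF U] by auto
  have Gs: "G \<in> sqmats M" "DW M V G = CW M V G" using G V1_iff[OF V] by auto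
  have s: "U \<in> sqmats N" "V \<in> sqmats M" using U V by (auto simp: unitary_def)
  have "CW (N*M) (kron M U V) (kron M F G) = kron M (CW N U F) (CW M V G)"
    unfolding CW_def kron_had kron_adj
    by (rule kron_mmult) (auto intro: had_sq adj_sq s)
  moreover have "DW (N*M) (kron M U V) (kron M F G) = kron M (DW N U F) (DW M V G)"
    unfolding DW_def kron_had kron_adj kron_cconj
    by (rule kron_mmult) (auto intro: had_sq adj_sq s)
  ultimately show ?thesis unfolding V1_iff[OF UV] using Fs Gs kron_sq by simp
qed


lemma ImV1_pre_subspace:
  assumes U: "unitary n W" and nz: "no_zero_entries n W"
  shows "rv.subspace {X. cscale c X \<in> ImV1 n W}"
proof (rule rv.subspaceI)
  show "0 \<in> {X. cscale c X \<in> ImV1 n W}"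
    using cm.subspace_0[OF V1_subspace[OF U nz]] by (simp add: ImV1_def)
next
  fix X Y assume "X \<in> {X. cscale c X \<in> ImV1 n W}" "Y \<in> {X. cscale c X \<in> ImV1 n W}"
  then show "X + Y \<in> {X. cscale c X \<in> ImV1 n W}"
    using cm.subspace_add[OF V1_subspace[OF U nz]] by (simp add: ImV1_def cm.scale_right_distrib)
next
  fix r X assume X: "X \<in> {X. cscale c X \<in> ImV1 n W}"
  have e: "cscale c (rscale r X) = cscale (complex_of_real r) (cscale c X)"
    by (auto simp: cscale_def rscale_def fun_eq_iff mult.left_commute)
  have "cscale (complex_of_real r) (cscale c X) \<in> ImV1 n W"
    using X cm.subspace_scale[OF V1_subspace[OF U nz]] by (auto simp: ImV1_def cscale_def)
  then show "rscale r X \<in> {X. cscale c X \<in> ImV1 n W}"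
    by (simp only: mem_Collect_eq e)
qed

theorem binary_ab:
  assumes U: "unitary N U" "no_zero_entries N U" and V: "unitary M V" "no_zero_entries M V"
  shows "cm.span {kron M F G | F G. F \<in> V1 N U \<and> G \<in> V1 M V} \<subseteq> V1 (N * M) (kron M U V)"
    and "cscale \<i> ` rv.span {kron M F G | F G. F \<in> ImV1 N U \<and> G \<in> ImV1 M V}
        \<subseteq> ImV1 (N * M) (kron M U V)"
proof -
  have UV: "unitary (N*M) (kron M U V)" "no_zero_entries (N*M) (kron M U V)"
    using unitary_kron nz_kron U V by auto
  show "cm.span {kron M F G | F G. F \<in> V1 N U \<and> G \<in> V1 M V} \<subseteq> V1 (N * M) (kron M U V)"
    by (rule cm.span_minimal) (auto intro: V1_kron[OF U V] V1_subspace[OF UV])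
  have "rv.span {kron M F G | F G. F \<in> ImV1 N U \<and> G \<in> ImV1 M V}
      \<subseteq> {X. cscale \<i> X \<in> ImV1 (N * M) (kron M U V)}"
  proof (rule rv.span_minimal[OF _ ImV1_pre_subspace[OF UV]], safe)
    fix F G assume F: "F \<in> ImV1 N U" and G: "G \<in> ImV1 M V"
    have "kron M F G \<in> V1 (N*M) (kron M U V)"
      using F G V1_kron[OF U V] by (auto simp: ImV1_def)
    then have "cscale \<i> (kron M F G) \<in> V1 (N*M) (kron M U V)"
      using cm.subspace_scale[OF V1_subspace[OF UV]] by blast
    moreover have "\<forall>i j. Re (cscale \<i> (kron M F G) i j) = 0"
      using F G by (auto simp: ImV1_def cscale_def kron_def)
    ultimately show "cscale \<i> (kron M F G) \<in> ImV1 (N * M) (kron M U V)"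
      by (simp add: ImV1_def)
  qed
  then show "cscale \<i> ` rv.span {kron M F G | F G. F \<in> ImV1 N U \<and> G \<in> ImV1 M V}
        \<subseteq> ImV1 (N * M) (kron M U V)" by blast
qed


definition TS :: "nat \<Rightarrow> cmat \<Rightarrow> cmat set" where
  "TS n W = {had (\<lambda>i j. \<i> * complex_of_real (R i j)) W | R :: nat \<Rightarrow> nat \<Rightarrow> real.
        antihermitian (mmult n (had (\<lambda>i j. \<i> * complex_of_real (R i j)) W) (adj W))}"

lemma defect_TS: "defect n W = rv.dim (TS n W)"
  by (simp add: defect_def TS_def)

definition Em :: "nat \<Rightarrow> nat \<Rightarrow> cmat" where
  "Em i j = (\<lambda>a b. if a = i \<and> b = j then 1 else 0)"

definition Fin :: "nat \<Rightarrow> cmat set" where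
  "Fin n = (\<lambda>(i,j). Em i j) ` ({..<n}\<times>{..<n}) \<union> (\<lambda>(i,j). cscale \<i> (Em i j)) ` ({..<n}\<times>{..<n})"

lemma finite_Fin: "finite (Fin n)"
  by (simp add: Fin_def)

lemma sqmats_span: "sqmats n \<subseteq> rv.span (Fin n)"
proof
  fix X assume X: "X \<in> sqmats n"
  have eq: "X = (\<Sum>p\<in>{..<n}\<times>{..<n}. rscale (Re (X (fst p) (snd p))) (Em (fst p) (snd p))
      + rscale (Im (X (fst p) (snd p))) (cscale \<i> (Em (fst p) (snd p))))"
  proof (rule ext, rule ext)
    fix a b
    have "(\<Sum>p\<in>{..<n}\<times>{..<n}. rscale (Re (X (fst p) (snd p))) (Em (fst p) (snd p))
      + rscale (Im (X (fst p) (snd p))) (cscale \<i> (Em (fst p) (snd p)))) a b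
      = (\<Sum>p\<in>{..<n}\<times>{..<n}. if p = (a,b) then X a b else 0)"
      unfolding fun_app_sum
    proof (rule sum.cong[OF refl])
      fix p :: "nat \<times> nat"
      show "(rscale (Re (X (fst p) (snd p))) (Em (fst p) (snd p))
        + rscale (Im (X (fst p) (snd p))) (cscale \<i> (Em (fst p) (snd p)))) a b
        = (if p = (a,b) then X a b else 0)"
        by (cases p) (auto simp: rscale_def cscale_def Em_def complex_eq_iff)
    qed
    also have "\<dots> = X a b" using X by (auto simp: sqmatsD)
    finally show "X a b = (\<Sum>p\<in>{..<n}\<times>{..<n}. rscale (Re (X (fst p) (snd p))) (Em (fst p) (snd p))
      + rscale (Im (X (fst p) (snd p))) (cscale \<i> (Em (fst p) (snd p)))) a b" by simp
  qed
  show "X \<in> rv.span (Fin n)"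
    by (subst eq, intro rv.span_sum rv.span_add rv.span_scale rv.span_base)
      (auto simp: Fin_def)
qed

lemma dim_basis:
  assumes "S \<subseteq> sqmats n"
  obtains B where "finite B" "B \<subseteq> S" "rv.independent B" "S \<subseteq> rv.span B" "card B = rv.dim S"
proof -
  obtain B where B: "B \<subseteq> S" "rv.independent B" "S \<subseteq> rv.span B" "card B = rv.dim S"
    by (rule rv.basis_exists)
  have "finite B" using rv.independent_span_bound[OF finite_Fin B(2)] B(1) assms sqmats_span by blast
  then show ?thesis using B that by blast
qed

lemma card_le_dim:
  assumes "S \<subseteq> sqmats n" "rv.independent C" "C \<subseteq> S"
  shows "card C \<le> rv.dim S"
proof -
  obtain B where B: "finite B" "B \<subseteq> S" "rv.independent B" "S \<subseteq> rv.span B" "card B = rv.dim S"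
    using dim_basis[OF assms(1)] by blast
  show ?thesis using rv.independent_span_bound[OF B(1) assms(2)] assms(3) B by auto
qed

lemma TS_sq: "W \<in> sqmats n \<Longrightarrow> TS n W \<subseteq> sqmats n"
  by (auto simp: TS_def had_sq)

lemma TS_elem: "X \<in> TS n W \<Longrightarrow> W i j \<noteq> 0 \<Longrightarrow> X i j = W i j * (\<i> * complex_of_real (Im (X i j / W i j)))"
  by (auto simp: TS_def had_def)


lemma TS_kron:
  assumes Us: "U \<in> sqmats N" and Vs: "V \<in> sqmats M" and X: "X \<in> TS N U" and Y: "Y \<in> TS M V"
  shows "cscale \<i> (kron M X Y) \<in> TS (N*M) (kron M U V)"
proof -
  obtain R where R: "X = had (\<lambda>i j. \<i> * complex_of_real (R i j)) U"
    and aR: "antihermitian (mmult N X (adj U))" using X by (auto simp: TS_def)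
  obtain R' where R': "Y = had (\<lambda>i j. \<i> * complex_of_real (R' i j)) V"
    and aR': "antihermitian (mmult M Y (adj V))" using Y by (auto simp: TS_def)
  define R'' where "R'' = (\<lambda>a b. - (R (a div M) (b div M) * R' (a mod M) (b mod M)))"
  have e: "cscale \<i> (kron M X Y) = had (\<lambda>i j. \<i> * complex_of_real (R'' i j)) (kron M U V)"
    unfolding R R' R''_def by (auto simp: fun_eq_iff kron_def had_def cscale_def algebra_simps)
  have Xs: "X \<in> sqmats N" "Y \<in> sqmats M" using X Y TS_sq Us Vs by auto
  have m: "mmult (N*M) (cscale \<i> (kron M X Y)) (adj (kron M U V))
      = cscale \<i> (kron M (mmult N X (adj U)) (mmult M Y (adj V)))"
    unfolding mmult_cscale_left kron_adj
    by (subst kron_mmult) (auto intro: Xs adj_sq Us Vs)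
  have "antihermitian (mmult (N*M) (cscale \<i> (kron M X Y)) (adj (kron M U V)))"
    unfolding m using aR aR' unfolding antihermitian_def adj_cscale kron_adj
    by (auto simp: fun_eq_iff kron_def cscale_def)
  then show ?thesis unfolding TS_def using e by auto
qed

lemma core:
  assumes M: "0 < M" and Us: "U \<in> sqmats N" and nzU: "no_zero_entries N U"
    and Vs: "V \<in> sqmats M"
    and BU: "finite BU" "BU \<subseteq> TS N U" "rv.independent BU"
    and BV: "finite BV" "BV \<subseteq> TS M V" "rv.independent BV"
    and sum0: "(\<Sum>p\<in>BU\<times>BV. rscale (c p) (cscale \<i> (kron M (fst p) (snd p)))) = 0"
  shows "\<forall>p\<in>BU\<times>BV. c p = 0"
proof -
  define im where "im x a b = Im (x a b / U a b)" for x :: cmat and a b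
  have Unz: "a < N \<Longrightarrow> b < N \<Longrightarrow> U a b \<noteq> 0" for a b
    using nzU by (simp add: no_zero_entries_def)
  have xrep: "x a b = U a b * (\<i> * complex_of_real (im x a b))" if "x \<in> BU" "a < N" "b < N" for x a b
    unfolding im_def using that BU(2) TS_elem Unz by blast
  have BUs: "x \<in> BU \<Longrightarrow> x \<in> sqmats N" for x using BU(2) TS_sq[OF Us] by blast
  have BVs: "y \<in> BV \<Longrightarrow> y \<in> sqmats M" for y using BV(2) TS_sq[OF Vs] by blast
  have step1: "(\<Sum>x\<in>BU. c (x,y) * im x a b) = 0" if ab: "a < N" "b < N" and y: "y \<in> BV" for a b y
  proof -
    define e where "e y = (\<Sum>x\<in>BU. c (x,y) * im x a b)" for y
    have "(\<Sum>y\<in>BV. rscale (e y) y) = 0"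
    proof (rule ext, rule ext)
      fix c' d'
      show "(\<Sum>y\<in>BV. rscale (e y) y) c' d' = 0 c' d'"
      proof (cases "c' < M \<and> d' < M")
        case True
        have dm: "(a*M+c') div M = a" "(a*M+c') mod M = c'" "(b*M+d') div M = b" "(b*M+d') mod M = d'"
          using True M by auto
        have "0 = (\<Sum>p\<in>BU\<times>BV. rscale (c p) (cscale \<i> (kron M (fst p) (snd p)))) (a*M+c') (b*M+d')"
          using sum0 by simp
        also have "\<dots> = (\<Sum>p\<in>BU\<times>BV. complex_of_real (c p) * (\<i> * (fst p a b * snd p c' d')))"
          unfolding fun_app_sum using True by (simp add: rscale_def cscale_def kron_def dm)
        also have "\<dots> = (\<Sum>x\<in>BU. \<Sum>y\<in>BV. complex_of_real (c (x,y)) * (\<i> * (x a b * y c' d')))"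
          by (simp add: sum.cartesian_product split_beta)
        also have "\<dots> = (\<Sum>y\<in>BV. \<Sum>x\<in>BU. complex_of_real (c (x,y)) * (\<i> * (x a b * y c' d')))"
          by (rule sum.swap)
        also have "\<dots> = (\<Sum>y\<in>BV. \<Sum>x\<in>BU. - U a b * (complex_of_real (c (x,y) * im x a b) * y c' d'))"
        proof (intro sum.cong refl)
          fix y x assume "x \<in> BU"
          then show "complex_of_real (c (x,y)) * (\<i> * (x a b * y c' d'))
              = - U a b * (complex_of_real (c (x,y) * im x a b) * y c' d')"
            using xrep[of x a b] ab by (simp add: algebra_simps)
        qed
        also have "\<dots> = - U a b * (\<Sum>y\<in>BV. complex_of_real (e y) * y c' d')"
          unfolding e_def by (simp add: sum_distrib_left sum_distrib_right of_real_sum)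
        finally have "(\<Sum>y\<in>BV. complex_of_real (e y) * y c' d') = 0"
          using Unz[OF ab] by simp
        then show ?thesis unfolding fun_app_sum by (auto intro!: sum.neutral simp: rscale_def)
      next
        case False
        then have "y c' d' = 0" if "y \<in> BV" for y using BVs[OF that] by (auto simp: sqmatsD)
        then show ?thesis unfolding fun_app_sum by (auto intro!: sum.neutral simp: rscale_def)
      qed
    qed
    then have "e y = 0" using BV(3) rv.dependent_finite[OF BV(1)] y by blast
    then show ?thesis by (simp add: e_def)
  qed
  show ?thesis
  proof
    fix p assume p: "p \<in> BU \<times> BV"
    obtain x0 y0 where p0: "p = (x0,y0)" "x0 \<in> BU" "y0 \<in> BV" using p by auto
    have "(\<Sum>x\<in>BU. rscale (c (x,y0)) x) = 0"
    proof (rule ext, rule ext)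
      fix a b
      show "(\<Sum>x\<in>BU. rscale (c (x,y0)) x) a b = 0 a b"
      proof (cases "a < N \<and> b < N")
        case True
        have "(\<Sum>x\<in>BU. rscale (c (x,y0)) x) a b = (\<Sum>x\<in>BU. complex_of_real (c (x,y0)) * x a b)"
          unfolding fun_app_sum by (simp add: rscale_def)
        also have "\<dots> = (\<Sum>x\<in>BU. U a b * \<i> * complex_of_real (c (x,y0) * im x a b))"
          using xrep True by (intro sum.cong refl) (simp add: algebra_simps)
        also have "\<dots> = U a b * \<i> * complex_of_real (\<Sum>x\<in>BU. c (x,y0) * im x a b)"
          by (simp add: sum_distrib_left of_real_sum)
        also have "\<dots> = 0" using step1 True p0 by simp
        finally show ?thesis by simp
      next
        case False
        then have "x a b = 0" if "x \<in> BU" for x using BUs[OF that] by (auto simp: sqmatsD)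
        then show ?thesis unfolding fun_app_sum by (auto intro!: sum.neutral simp: rscale_def)
      qed
    qed
    moreover have "\<not> ((\<exists>v\<in>BU. (\<lambda>x. c (x,y0)) v \<noteq> 0) \<and> (\<Sum>v\<in>BU. rscale ((\<lambda>x. c (x,y0)) v) v) = 0)"
      using BU(3) rv.dependent_finite[OF BU(1)] exI[of "\<lambda>u. (\<exists>v\<in>BU. u v \<noteq> 0) \<and> (\<Sum>v\<in>BU. rscale (u v) v) = 0" "\<lambda>x. c (x,y0)"]
      by blast
    ultimately have "c (x0,y0) = 0" using p0 by auto
    then show "c p = 0" using p0 by simp
  qed
qed


theorem binary_c:
  assumes U: "unitary N U" "no_zero_entries N U" and V: "unitary M V" "no_zero_entries M V"
  shows "defect N U * defect M V \<le> defect (N * M) (kron M U V)"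
proof -
  have Us: "U \<in> sqmats N" and Vs: "V \<in> sqmats M" using U V by (auto simp: unitary_def)
  have UVs: "kron M U V \<in> sqmats (N*M)" using kron_sq[OF Us Vs] .
  obtain BU where BU: "finite BU" "BU \<subseteq> TS N U" "rv.independent BU" "card BU = defect N U"
    using dim_basis[OF TS_sq[OF Us]] unfolding defect_TS by metis
  obtain BV where BV: "finite BV" "BV \<subseteq> TS M V" "rv.independent BV" "card BV = defect M V"
    using dim_basis[OF TS_sq[OF Vs]] unfolding defect_TS by metis
  show ?thesis
  proof (cases "M = 0")
    case True
    have "BV \<subseteq> {0}" using BV(2) TS_sq[OF Vs] True sq0 by blast
    moreover have "0 \<notin> BV" using BV(3) rv.dependent_zero by blast
    ultimately have "BV = {}" by blast
    then show ?thesis using BV(4) by simp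
  next
    case False
    then have M: "0 < M" by simp
    define \<phi> where "\<phi> p = cscale \<i> (kron M (fst p) (snd p))" for p :: "cmat \<times> cmat"
    have cz: "\<And>c. (\<Sum>p\<in>BU\<times>BV. rscale (c p) (\<phi> p)) = 0 \<Longrightarrow> \<forall>p\<in>BU\<times>BV. c p = 0"
      unfolding \<phi>_def using core[OF M Us U(2) Vs BU(1-3) BV(1-3)] by blast
    have inj: "inj_on \<phi> (BU\<times>BV)"
    proof (rule inj_onI, rule ccontr)
      fix p q assume p: "p \<in> BU\<times>BV" and q: "q \<in> BU\<times>BV" and e: "\<phi> p = \<phi> q" and ne: "p \<noteq> q"
      define c where "c r = (if r = p then 1 else 0) - (if r = q then 1 else (0::real))" for r
      have "(\<Sum>r\<in>BU\<times>BV. rscale (c r) (\<phi> r))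
          = (\<Sum>r\<in>BU\<times>BV. (if r = p then \<phi> r else 0)) - (\<Sum>r\<in>BU\<times>BV. (if r = q then \<phi> r else 0))"
        unfolding c_def rv.scale_left_diff_distrib sum_subtractf
        by (intro arg_cong2[where f="(-)"] sum.cong refl) auto
      also have "\<dots> = 0" using p q e BU(1) BV(1) by (simp add: sum.delta)
      finally have "c p = 0" using cz p by blast
      then show False using ne by (simp add: c_def)
    qed
    define C where "C = \<phi> ` (BU\<times>BV)"
    have finC: "finite C" using BU(1) BV(1) by (simp add: C_def)
    have indC: "rv.independent C"
    proof (rule rv.independent_if_scalars_zero[OF finC])
      fix f x assume s: "(\<Sum>x\<in>C. rscale (f x) x) = 0" and x: "x \<in> C"
      have "(\<Sum>p\<in>BU\<times>BV. rscale (f (\<phi> p)) (\<phi> p)) = 0"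
        using s unfolding C_def by (simp add: sum.reindex[OF inj])
      then have "\<forall>p\<in>BU\<times>BV. f (\<phi> p) = 0" by (rule cz)
      then show "f x = 0" using x unfolding C_def by blast
    qed
    have CT: "C \<subseteq> TS (N*M) (kron M U V)"
      unfolding C_def \<phi>_def using BU(2) BV(2) by (auto intro!: TS_kron[OF Us Vs])
    have "card C = card BU * card BV"
      unfolding C_def by (simp add: card_image[OF inj] card_cartesian_product)
    moreover have "card C \<le> defect (N*M) (kron M U V)"
      unfolding defect_TS by (rule card_le_dim[OF TS_sq[OF UVs] indC CT])
    ultimately show ?thesis using BU(4) BV(4) by simp
  qed
qed


lemma ksize_zip: "length Fs = length ps \<Longrightarrow> ksize (zip (map fst ps) Fs) = ksize ps"
proof (induction ps arbitrary: Fs)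
  case Nil then show ?case by simp
next
  case (Cons p ps) then show ?case by (cases Fs) auto
qed

lemma idm1_unitary: "unitary 1 (idm 1)" "no_zero_entries 1 (idm 1)"
  by (auto simp: unitary_def sqmats_def mmult_def idm_def adj_def fun_eq_iff no_zero_entries_def)

lemma kmat_unitary:
  "(\<forall>k<length ps. unitary (fst (ps ! k)) (snd (ps ! k)) \<and> no_zero_entries (fst (ps ! k)) (snd (ps ! k)))
   \<Longrightarrow> unitary (ksize ps) (kmat ps) \<and> no_zero_entries (ksize ps) (kmat ps)"
proof (induction ps)
  case Nil then show ?case using idm1_unitary by simp
next
  case (Cons p ps)
  have p: "unitary (fst p) (snd p)" "no_zero_entries (fst p) (snd p)" using Cons.prems by force+
  have "\<forall>k<length ps. unitary (fst (ps ! k)) (snd (ps ! k)) \<and> no_zero_entries (fst (ps ! k)) (snd (ps ! k))"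
    using Cons.prems by force
  then have ih: "unitary (ksize ps) (kmat ps)" "no_zero_entries (ksize ps) (kmat ps)" using Cons.IH by auto
  show ?case using unitary_kron[OF p(1) ih(1)] nz_kron[OF p(2) ih(2)] by simp
qed

lemma idm1_V1: "idm 1 \<in> V1 1 (idm 1)"
  unfolding V1_iff[OF idm1_unitary]
  by (auto simp: sqmats_def mmult_def idm_def adj_def fun_eq_iff DW_def CW_def had_def cconj_def)

lemma kmat_V1:
  "(\<forall>k<length ps. unitary (fst (ps ! k)) (snd (ps ! k)) \<and> no_zero_entries (fst (ps ! k)) (snd (ps ! k)))
   \<Longrightarrow> length Fs = length ps \<Longrightarrow> (\<forall>k<length ps. Fs ! k \<in> V1 (fst (ps ! k)) (snd (ps ! k)))
   \<Longrightarrow> kmat (zip (map fst ps) Fs) \<in> V1 (ksize ps) (kmat ps)"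
proof (induction ps arbitrary: Fs)
  case Nil then show ?case using idm1_V1 by simp
next
  case (Cons p ps)
  obtain F Fs' where Fs: "Fs = F # Fs'" using Cons.prems(2) by (cases Fs) auto
  have p: "unitary (fst p) (snd p)" "no_zero_entries (fst p) (snd p)" using Cons.prems by force+
  have ps: "\<forall>k<length ps. unitary (fst (ps ! k)) (snd (ps ! k)) \<and> no_zero_entries (fst (ps ! k)) (snd (ps ! k))"
    using Cons.prems by force
  have l: "length Fs' = length ps" using Cons.prems Fs by simp
  have F: "F \<in> V1 (fst p) (snd p)" using Cons.prems(3) Fs by force
  have "\<forall>k<length ps. Fs' ! k \<in> V1 (fst (ps ! k)) (snd (ps ! k))" using Cons.prems(3) Fs by force
  then have ih: "kmat (zip (map fst ps) Fs') \<in> V1 (ksize ps) (kmat ps)" using Cons.IH ps l by blast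
  have u: "unitary (ksize ps) (kmat ps)" "no_zero_entries (ksize ps) (kmat ps)" using kmat_unitary[OF ps] by auto
  show ?case using V1_kron[OF p u F ih] Fs ksize_zip[OF l] by simp
qed

lemma kmat_Im:
  "length Fs = length ps \<Longrightarrow> (\<forall>k<length ps. Fs ! k \<in> ImV1 (fst (ps ! k)) (snd (ps ! k)))
   \<Longrightarrow> \<forall>i j. (if even (length ps) then Im (kmat (zip (map fst ps) Fs) i j) = 0
               else Re (kmat (zip (map fst ps) Fs) i j) = 0)"
proof (induction ps arbitrary: Fs)
  case Nil then show ?case by (simp add: idm_def)
next
  case (Cons p ps)
  obtain F Fs' where Fs: "Fs = F # Fs'" using Cons.prems(1) by (cases Fs) auto
  have l: "length Fs' = length ps" using Cons.prems Fs by simp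
  have F: "F \<in> ImV1 (fst p) (snd p)" using Cons.prems(2) Fs by force
  have "\<forall>k<length ps. Fs' ! k \<in> ImV1 (fst (ps ! k)) (snd (ps ! k))" using Cons.prems(2) Fs by force
  then have ih: "\<forall>i j. (if even (length ps) then Im (kmat (zip (map fst ps) Fs') i j) = 0
               else Re (kmat (zip (map fst ps) Fs') i j) = 0)" using Cons.IH l by blast
  have FR: "Re (F i j) = 0" for i j using F by (simp add: ImV1_def)
  show ?case
  proof (intro allI)
    fix i j
    let ?m = "ksize (zip (map fst ps) Fs')"
    let ?a = "F (i div ?m) (j div ?m)" and ?b = "kmat (zip (map fst ps) Fs') (i mod ?m) (j mod ?m)"
    have "kmat (zip (map fst (p # ps)) Fs) i j = ?a * ?b" using Fs by (simp add: kron_def)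
    moreover have "Re ?a = 0" by (rule FR)
    moreover have "if even (length ps) then Im ?b = 0 else Re ?b = 0" using ih by blast
    ultimately show "if even (length (p # ps)) then Im (kmat (zip (map fst (p # ps)) Fs) i j) = 0
               else Re (kmat (zip (map fst (p # ps)) Fs) i j) = 0"
      by (auto split: if_splits)
  qed
qed

lemma defect_idm1: "1 \<le> defect 1 (idm 1)"
proof -
  define X where "X = had (\<lambda>i j. \<i> * complex_of_real ((\<lambda>i j. 1) i j)) (idm 1)"
  have "X \<in> TS 1 (idm 1)" unfolding TS_def X_def
    by (auto simp: antihermitian_def mmult_def idm_def adj_def had_def fun_eq_iff)
  moreover have "X \<noteq> 0" by (auto simp: X_def had_def idm_def fun_eq_iff)
  moreover have I1: "idm 1 \<in> sqmats 1" using idm1_unitary(1) unfolding unitary_def by blast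
  ultimately have "card {X} \<le> defect 1 (idm 1)" unfolding defect_TS
    by (intro card_le_dim[OF TS_sq[OF I1]]) auto
  then show ?thesis by simp
qed

lemma kmat_defect:
  "(\<forall>k<length ps. unitary (fst (ps ! k)) (snd (ps ! k)) \<and> no_zero_entries (fst (ps ! k)) (snd (ps ! k)))
   \<Longrightarrow> (\<Prod>k<length ps. defect (fst (ps ! k)) (snd (ps ! k))) \<le> defect (ksize ps) (kmat ps)"
proof (induction ps)
  case Nil then show ?case using defect_idm1 by simp
next
  case (Cons p ps)
  have p: "unitary (fst p) (snd p)" "no_zero_entries (fst p) (snd p)" using Cons.prems by force+
  have ps: "\<forall>k<length ps. unitary (fst (ps ! k)) (snd (ps ! k)) \<and> no_zero_entries (fst (ps ! k)) (snd (ps ! k))"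
    using Cons.prems by force
  have u: "unitary (ksize ps) (kmat ps)" "no_zero_entries (ksize ps) (kmat ps)" using kmat_unitary[OF ps] by auto
  have "(\<Prod>k<length (p#ps). defect (fst ((p#ps) ! k)) (snd ((p#ps) ! k)))
      = defect (fst p) (snd p) * (\<Prod>k<length ps. defect (fst (ps ! k)) (snd (ps ! k)))"
    unfolding length_Cons prod.lessThan_Suc_shift by simp
  also have "\<dots> \<le> defect (fst p) (snd p) * defect (ksize ps) (kmat ps)"
    using Cons.IH[OF ps] by simp
  also have "\<dots> \<le> defect (ksize (p#ps)) (kmat (p#ps))"
    using binary_c[OF p u] by simp
  finally show ?case .
qed


theorem corollary3p14:
  shows
  "(\<forall>N M U V. unitary N U \<and> no_zero_entries N U \<and> unitary M V \<and> no_zero_entries M V \<longrightarrow>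
      module.span cscale {kron M F G | F G. F \<in> V1 N U \<and> G \<in> V1 M V}
        \<subseteq> V1 (N * M) (kron M U V)
    \<and> cscale \<i> ` module.span rscale {kron M F G | F G. F \<in> ImV1 N U \<and> G \<in> ImV1 M V}
        \<subseteq> ImV1 (N * M) (kron M U V)
    \<and> defect N U * defect M V \<le> defect (N * M) (kron M U V))
  \<and> (\<forall>ps :: (nat \<times> cmat) list. 2 \<le> length ps \<and>
        (\<forall>k<length ps. unitary (fst (ps ! k)) (snd (ps ! k))
                      \<and> no_zero_entries (fst (ps ! k)) (snd (ps ! k))) \<longrightarrow>
      module.span cscale {kmat (zip (map fst ps) Fs) | Fs.
          length Fs = length ps \<and> (\<forall>k<length ps. Fs ! k \<in> V1 (fst (ps ! k)) (snd (ps ! k)))}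
        \<subseteq> V1 (ksize ps) (kmat ps)
    \<and> cscale (if even (length ps) then \<i> else 1) ` module.span rscale {kmat (zip (map fst ps) Fs) | Fs.
          length Fs = length ps \<and> (\<forall>k<length ps. Fs ! k \<in> ImV1 (fst (ps ! k)) (snd (ps ! k)))}
        \<subseteq> ImV1 (ksize ps) (kmat ps)
    \<and> (\<Prod>k<length ps. defect (fst (ps ! k)) (snd (ps ! k))) \<le> defect (ksize ps) (kmat ps))"
proof (intro conjI allI impI)
  fix N M U V assume "unitary N U \<and> no_zero_entries N U \<and> unitary M V \<and> no_zero_entries M V"
  then have U: "unitary N U" "no_zero_entries N U" and V: "unitary M V" "no_zero_entries M V" by auto
  show "module.span cscale {kron M F G | F G. F \<in> V1 N U \<and> G \<in> V1 M V} \<subseteq> V1 (N * M) (kron M U V)"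
    by (rule binary_ab(1)[OF U V])
  show "cscale \<i> ` module.span rscale {kron M F G | F G. F \<in> ImV1 N U \<and> G \<in> ImV1 M V}
        \<subseteq> ImV1 (N * M) (kron M U V)"
    by (rule binary_ab(2)[OF U V])
  show "defect N U * defect M V \<le> defect (N * M) (kron M U V)"
    by (rule binary_c[OF U V])
next
  fix ps :: "(nat \<times> cmat) list"
  assume "2 \<le> length ps \<and> (\<forall>k<length ps. unitary (fst (ps ! k)) (snd (ps ! k))
                      \<and> no_zero_entries (fst (ps ! k)) (snd (ps ! k)))"
  then have ps: "\<forall>k<length ps. unitary (fst (ps ! k)) (snd (ps ! k))
                      \<and> no_zero_entries (fst (ps ! k)) (snd (ps ! k))" by blast
  have u: "unitary (ksize ps) (kmat ps)" "no_zero_entries (ksize ps) (kmat ps)"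
    using kmat_unitary[OF ps] by auto
  show "module.span cscale {kmat (zip (map fst ps) Fs) | Fs.
          length Fs = length ps \<and> (\<forall>k<length ps. Fs ! k \<in> V1 (fst (ps ! k)) (snd (ps ! k)))}
        \<subseteq> V1 (ksize ps) (kmat ps)"
    by (rule cm.span_minimal) (auto intro: kmat_V1[OF ps] V1_subspace[OF u])
  let ?c = "if even (length ps) then \<i> else 1"
  have "module.span rscale {kmat (zip (map fst ps) Fs) | Fs.
          length Fs = length ps \<and> (\<forall>k<length ps. Fs ! k \<in> ImV1 (fst (ps ! k)) (snd (ps ! k)))}
       \<subseteq> {X. cscale ?c X \<in> ImV1 (ksize ps) (kmat ps)}"
  proof (rule rv.span_minimal[OF _ ImV1_pre_subspace[OF u]], safe)
    fix Fs assume l: "length Fs = length ps"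
      and Fs: "\<forall>k<length ps. Fs ! k \<in> ImV1 (fst (ps ! k)) (snd (ps ! k))"
    have "kmat (zip (map fst ps) Fs) \<in> V1 (ksize ps) (kmat ps)"
      using kmat_V1[OF ps l] Fs by (auto simp: ImV1_def)
    then have "cscale ?c (kmat (zip (map fst ps) Fs)) \<in> V1 (ksize ps) (kmat ps)"
      using cm.subspace_scale[OF V1_subspace[OF u]] by blast
    moreover have "\<forall>i j. Re (cscale ?c (kmat (zip (map fst ps) Fs)) i j) = 0"
      using kmat_Im[OF l Fs] by (auto simp: cscale_def split: if_splits)
    ultimately show "cscale ?c (kmat (zip (map fst ps) Fs)) \<in> ImV1 (ksize ps) (kmat ps)"
      by (simp add: ImV1_def)
  qed
  then show "cscale ?c ` module.span rscale {kmat (zip (map fst ps) Fs) | Fs.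
          length Fs = length ps \<and> (\<forall>k<length ps. Fs ! k \<in> ImV1 (fst (ps ! k)) (snd (ps ! k)))}
        \<subseteq> ImV1 (ksize ps) (kmat ps)" by blast
  show "(\<Prod>k<length ps. defect (fst (ps ! k)) (snd (ps ! k))) \<le> defect (ksize ps) (kmat ps)"
    by (rule kmat_defect[OF ps])
qed

end
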